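(* Let $\langle\mathfrak B,\varphi,(Y,\mathbb S,\sigma)\rangle$ be a linear cocycle with finite-dimensional Banach fibre $\mathfrak B$. Then for every $y\in Y$ there exists a constant $L>0$ such that $|\varphi(t,u,y)|\le L|u|$ for all $t\in\mathbb T$, $t\ge0$, and all $u\in\mathfrak B^+_y:=\{u\in\mathfrak B:\ \sup_{t\ge0}|\varphi(t,u,y)|<+\infty\}$.
   Context: $\mathbb S$ is $\mathbb R$ or $\mathbb Z$, $\mathbb T$ is a sub-semigroup of $\mathbb S$ containing $\mathbb S_+=\{s\in\mathbb S: s\ge0\}$, and $(Y,\mathbb S,\sigma)$ is a dynamical system on a metric space $Y$. A linear cocycle over $(Y,\mathbb S,\sigma)$ with fibre the Banach space $(\mathfrak B,|\cdot|)$ is a continuous map $\varphi:\mathbb T\times\mathfrak B\times Y\to\mathfrak B$ with $\varphi(0,u,y)=u$, $\varphi(t+\tau,u,y)=\varphi(t,\varphi(\tau,u,y),\sigma(\tau,y))$ for all $t,\tau\in\mathbb T$, $u\in\mathfrak B$, $y\in Y$, and such that $\varphi(t,\cdot,y)$ is linear for every $(t,y)$. *)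

theory Defs
  imports "HOL-Analysis.Analysis"
begin

definition time_group :: "real set \<Rightarrow> bool" where
  "time_group S \<longleftrightarrow> S = UNIV \<or> S = \<int>"

definition time_semigroup :: "real set \<Rightarrow> real set \<Rightarrow> bool" where
  "time_semigroup S T \<longleftrightarrow> T \<subseteq> S \<and> (\<forall>t\<in>T. \<forall>\<tau>\<in>T. t + \<tau> \<in> T) \<and> {s\<in>S. 0 \<le> s} \<subseteq> T"

definition dynamical_system :: "real set \<Rightarrow> (real \<Rightarrow> 'y::metric_space \<Rightarrow> 'y) \<Rightarrow> bool" where
  "dynamical_system S \<sigma> \<longleftrightarrow>
     continuous_on (S \<times> UNIV) (\<lambda>(t, y). \<sigma> t y) \<and>
     (\<forall>y. \<sigma> 0 y = y) \<and>
     (\<forall>t\<in>S. \<forall>\<tau>\<in>S. \<forall>y. \<sigma> (t + \<tau>) y = \<sigma> t (\<sigma> \<tau> y))"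

definition linear_cocycle ::
  "real set \<Rightarrow> (real \<Rightarrow> 'y::metric_space \<Rightarrow> 'y) \<Rightarrow> (real \<Rightarrow> 'b::real_normed_vector \<Rightarrow> 'y \<Rightarrow> 'b) \<Rightarrow> bool" where
  "linear_cocycle T \<sigma> \<phi> \<longleftrightarrow>
     continuous_on (T \<times> UNIV \<times> UNIV) (\<lambda>(t, u, y). \<phi> t u y) \<and>
     (\<forall>u y. \<phi> 0 u y = u) \<and>
     (\<forall>t\<in>T. \<forall>\<tau>\<in>T. \<forall>u y. \<phi> (t + \<tau>) u y = \<phi> t (\<phi> \<tau> u y) (\<sigma> \<tau> y)) \<and>
     (\<forall>t\<in>T. \<forall>y. linear (\<lambda>u. \<phi> t u y))"

end

theory Submission
  imports Defs
begin

lemma coord_bound: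
  fixes B :: "'b::real_normed_vector set"
  assumes "finite B" "independent B"
  shows "\<exists>K>0. \<forall>c. \<forall>b\<in>B. \<bar>c b\<bar> \<le> K * norm (\<Sum>x\<in>B. c x *\<^sub>R x)"
  using assms
proof (induction B rule: finite_induct)
  case empty
  then show ?case by (intro exI[of _ 1]) auto
next
  case (insert a B)
  from insert.prems insert.hyps have indB: "independent B" and anot: "a \<notin> span B"
    by (auto simp: independent_insert)
  from insert.IH[OF indB] obtain K where K: "K > 0"
    and HK: "\<And>c b. b \<in> B \<Longrightarrow> \<bar>c b\<bar> \<le> K * norm (\<Sum>x\<in>B. c x *\<^sub>R x)" by blast
  have "\<exists>\<delta>>0. \<forall>c. \<delta> \<le> norm (a - (\<Sum>x\<in>B. c x *\<^sub>R x))"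
  proof (rule ccontr)
    assume "\<not> ?thesis"
    then have "\<forall>\<delta>>0. \<exists>c. norm (a - (\<Sum>x\<in>B. c x *\<^sub>R x)) < \<delta>" by (meson not_le)
    then have "\<forall>n::nat. \<exists>c. norm (a - (\<Sum>x\<in>B. c x *\<^sub>R x)) < inverse (real (Suc n))"
      by simp
    then obtain C where C: "\<And>n. norm (a - (\<Sum>x\<in>B. C n x *\<^sub>R x)) < inverse (real (Suc n))"
      by metis
    define v where "v n = (\<Sum>x\<in>B. C n x *\<^sub>R x)" for n
    have "(\<lambda>n. a - v n) \<longlonglongrightarrow> 0"
    proof (rule Lim_null_comparison)
      show "\<forall>\<^sub>F n in sequentially. norm (a - v n) \<le> inverse (real (Suc n))"
        using C by (simp add: v_def less_imp_le)
      show "(\<lambda>n. inverse (real (Suc n))) \<longlonglongrightarrow> 0"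
        using LIMSEQ_inverse_real_of_nat by simp
    qed
    then have "(\<lambda>n. a - (a - v n)) \<longlonglongrightarrow> a - 0"
      by (intro tendsto_diff tendsto_const)
    then have va: "v \<longlonglongrightarrow> a" by simp
    then have "Cauchy v" by (intro convergent_Cauchy convergentI)
    have "\<forall>b\<in>B. \<exists>l. (\<lambda>n. C n b) \<longlonglongrightarrow> l"
    proof
      fix b assume b: "b \<in> B"
      have "Cauchy (\<lambda>n. C n b)"
      proof (rule metric_CauchyI)
        fix e :: real assume e: "e > 0"
        from \<open>Cauchy v\<close> e K obtain M where M: "\<And>m n. m \<ge> M \<Longrightarrow> n \<ge> M \<Longrightarrow> dist (v m) (v n) < e / K"
          unfolding Cauchy_def by (meson divide_pos_pos)
        show "\<exists>M. \<forall>m\<ge>M. \<forall>n\<ge>M. dist (C m b) (C n b) < e"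
        proof (intro exI allI impI)
          fix m n assume "m \<ge> M" "n \<ge> M"
          have eq: "(\<Sum>x\<in>B. (C m x - C n x) *\<^sub>R x) = v m - v n"
            by (simp add: v_def scaleR_diff_left sum_subtractf)
          have "dist (C m b) (C n b) = \<bar>(\<lambda>x. C m x - C n x) b\<bar>" by (simp add: dist_real_def)
          also have "\<dots> \<le> K * norm (v m - v n)" using HK[OF b, of "\<lambda>x. C m x - C n x"] eq by simp
          also have "\<dots> < K * (e / K)" using M[OF \<open>m \<ge> M\<close> \<open>n \<ge> M\<close>] K
            by (simp add: dist_norm pos_less_divide_eq mult.commute)
          also have "\<dots> = e" using K by simp
          finally show "dist (C m b) (C n b) < e" .
        qed
      qed
      then show "\<exists>l. (\<lambda>n. C n b) \<longlonglongrightarrow> l" by (simp add: Cauchy_convergent_iff convergent_def)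
    qed
    then obtain D where D: "\<And>b. b \<in> B \<Longrightarrow> (\<lambda>n. C n b) \<longlonglongrightarrow> D b" by metis
    have "v \<longlonglongrightarrow> (\<Sum>x\<in>B. D x *\<^sub>R x)"
      unfolding v_def by (intro tendsto_sum tendsto_scaleR D tendsto_const)
    with va have "a = (\<Sum>x\<in>B. D x *\<^sub>R x)" using tendsto_unique trivial_limit_sequentially by blast
    then have "a \<in> span B" by (simp add: span_sum span_scale span_base)
    with anot show False by simp
  qed
  then obtain \<delta> where d: "\<delta> > 0" and hd: "\<And>c. \<delta> \<le> norm (a - (\<Sum>x\<in>B. c x *\<^sub>R x))" by blast
  define K' where "K' = max (1/\<delta>) (K * (1 + norm a / \<delta>))"
  have K'pos: "K' > 0" using d by (simp add: K'_def less_max_iff_disj)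
  show ?case
  proof (intro exI[of _ K'] conjI allI ballI K'pos)
    fix c b assume b: "b \<in> insert a B"
    define v where "v = (\<Sum>x\<in>B. c x *\<^sub>R x)"
    define s where "s = (\<Sum>x\<in>insert a B. c x *\<^sub>R x)"
    have s: "s = c a *\<^sub>R a + v" using insert.hyps by (simp add: s_def v_def)
    have c1: "\<bar>c a\<bar> * \<delta> \<le> norm s"
    proof (cases "c a = 0")
      case True then show ?thesis by simp
    next
      case False
      have "c a *\<^sub>R (\<Sum>x\<in>B. (- c x / c a) *\<^sub>R x) = - v"
        using False by (simp add: v_def scaleR_sum_right sum_negf[symmetric])
      then have "s = c a *\<^sub>R (a - (\<Sum>x\<in>B. (- c x / c a) *\<^sub>R x))"
        by (simp add: s scaleR_right_diff_distrib)
      then have "norm s = \<bar>c a\<bar> * norm (a - (\<Sum>x\<in>B. (- c x / c a) *\<^sub>R x))" by simp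
      moreover have "\<delta> \<le> norm (a - (\<Sum>x\<in>B. (- c x / c a) *\<^sub>R x))" by (rule hd)
      ultimately show ?thesis by (simp add: mult_left_mono)
    qed
    then have ca: "\<bar>c a\<bar> \<le> norm s / \<delta>" using d by (simp add: field_simps)
    have "norm v \<le> norm s + \<bar>c a\<bar> * norm a"
      using s norm_triangle_ineq4[of s "c a *\<^sub>R a"] by (simp add: algebra_simps)
    also have "\<dots> \<le> norm s + norm s / \<delta> * norm a"
      using mult_right_mono[OF ca norm_ge_zero[of a]] by simp
    also have "\<dots> = norm s * (1 + norm a / \<delta>)" by (simp add: algebra_simps)
    finally have nv: "norm v \<le> norm s * (1 + norm a / \<delta>)" .
    show "\<bar>c b\<bar> \<le> K' * norm s"
    proof (cases "b = a")
      case True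
      have "norm s / \<delta> \<le> K' * norm s"
        using mult_right_mono[of "1/\<delta>" K' "norm s"] by (simp add: K'_def)
      with ca True show ?thesis by simp
    next
      case False
      with b have bB: "b \<in> B" by simp
      have "\<bar>c b\<bar> \<le> K * norm v" using HK[OF bB] by (simp add: v_def)
      also have "\<dots> \<le> K * (norm s * (1 + norm a / \<delta>))" using nv K by (simp add: mult_left_mono)
      also have "\<dots> = (K * (1 + norm a / \<delta>)) * norm s" by simp
      also have "\<dots> \<le> K' * norm s" by (intro mult_right_mono) (auto simp: K'_def)
      finally show ?thesis .
    qed
  qed
qed


theorem mainTheorem9:
  fixes S T :: "real set"
    and \<sigma> :: "real \<Rightarrow> 'y::metric_space \<Rightarrow> 'y"
    and \<phi> :: "real \<Rightarrow> 'b::banach \<Rightarrow> 'y \<Rightarrow> 'b"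
  assumes "time_group S"
    and "time_semigroup S T"
    and "dynamical_system S \<sigma>"
    and "linear_cocycle T \<sigma> \<phi>"
    and "\<exists>A::'b set. finite A \<and> span A = UNIV"
  shows "\<forall>y. \<exists>L>0. \<forall>t\<in>T. 0 \<le> t \<longrightarrow>
           (\<forall>u. (\<exists>M. \<forall>s\<in>T. 0 \<le> s \<longrightarrow> norm (\<phi> s u y) \<le> M) \<longrightarrow>
                norm (\<phi> t u y) \<le> L * norm u)"
proof
  fix y
  from assms(4) have lin: "\<And>t. t \<in> T \<Longrightarrow> linear (\<lambda>u. \<phi> t u y)"
    by (simp add: linear_cocycle_def)
  from assms(5) obtain A :: "'b set" where A: "finite A" "span A = UNIV" by blast
  define W where "W = {u. \<exists>M. \<forall>s\<in>T. 0 \<le> s \<longrightarrow> norm (\<phi> s u y) \<le> M}"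
  obtain B where BW: "B \<subseteq> W" and indB: "independent B" and WB: "W \<subseteq> span B"
    and "card B = dim W"
    by (rule basis_exists[of W])
  have finB: "finite B" using independent_span_bound[OF A(1) indB] A(2) by auto
  obtain K where K: "K > 0" and HK: "\<And>c b. b \<in> B \<Longrightarrow> \<bar>c b\<bar> \<le> K * norm (\<Sum>x\<in>B. c x *\<^sub>R x)"
    using coord_bound[OF finB indB] by blast
  have "\<forall>b\<in>B. \<exists>M. \<forall>s\<in>T. 0 \<le> s \<longrightarrow> norm (\<phi> s b y) \<le> M" using BW by (auto simp: W_def)
  then obtain Mf where Mf: "\<And>b s. b \<in> B \<Longrightarrow> s \<in> T \<Longrightarrow> 0 \<le> s \<Longrightarrow> norm (\<phi> s b y) \<le> Mf b"
    by metis
  define L where "L = 1 + K * (\<Sum>x\<in>B. \<bar>Mf x\<bar>)"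
  have "0 \<le> K * (\<Sum>x\<in>B. \<bar>Mf x\<bar>)" using K by (simp add: sum_nonneg)
  then have Lpos: "L > 0" by (simp add: L_def)
  show "\<exists>L>0. \<forall>t\<in>T. 0 \<le> t \<longrightarrow>
           (\<forall>u. (\<exists>M. \<forall>s\<in>T. 0 \<le> s \<longrightarrow> norm (\<phi> s u y) \<le> M) \<longrightarrow>
                norm (\<phi> t u y) \<le> L * norm u)"
  proof (intro exI[of _ L] conjI Lpos ballI impI allI)
    fix t u assume t: "t \<in> T" "0 \<le> t" and "\<exists>M. \<forall>s\<in>T. 0 \<le> s \<longrightarrow> norm (\<phi> s u y) \<le> M"
    then have "u \<in> W" by (simp add: W_def)
    then have "u \<in> span B" using WB by blast
    then obtain c where uc: "u = (\<Sum>x\<in>B. c x *\<^sub>R x)" using span_finite[OF finB] by auto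
    have "\<phi> t u y = (\<Sum>x\<in>B. \<phi> t (c x *\<^sub>R x) y)"
      unfolding uc by (rule linear_sum[OF lin[OF t(1)]])
    also have "\<dots> = (\<Sum>x\<in>B. c x *\<^sub>R \<phi> t x y)"
      by (simp add: linear_scale[OF lin[OF t(1)]])
    finally have "norm (\<phi> t u y) \<le> (\<Sum>x\<in>B. norm (c x *\<^sub>R \<phi> t x y))"
      using norm_sum[of "\<lambda>x. c x *\<^sub>R \<phi> t x y" B] by simp
    also have "\<dots> \<le> (\<Sum>x\<in>B. (K * norm u) * \<bar>Mf x\<bar>)"
    proof (rule sum_mono)
      fix x assume x: "x \<in> B"
      have "norm (c x *\<^sub>R \<phi> t x y) = \<bar>c x\<bar> * norm (\<phi> t x y)" by simp
      also have "\<dots> \<le> (K * norm u) * \<bar>Mf x\<bar>"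
        using HK[OF x, of c] uc Mf[OF x t] by (intro mult_mono) auto
      finally show "norm (c x *\<^sub>R \<phi> t x y) \<le> (K * norm u) * \<bar>Mf x\<bar>" .
    qed
    also have "\<dots> = K * (\<Sum>x\<in>B. \<bar>Mf x\<bar>) * norm u" by (simp add: sum_distrib_left[symmetric])
    also have "\<dots> \<le> L * norm u" by (intro mult_right_mono) (auto simp: L_def)
    finally show "norm (\<phi> t u y) \<le> L * norm u" .
  qed
qed

end
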